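(* Let $b=2$, $c>0$ and $k\in\left(0,\frac{c}{3}\right)$. Let $\phi=\phi_k\in C^\infty(\mathbb{R})$ be the solitary wave profile of $$u_t-u_{txx}+3uu_x=2u_xu_{xx}+uu_{xxx},$$ that is, the travelling wave $u(t,x)=\phi(x-ct)$ with $\phi'(0)=0$, $\phi(x)\to k$ as $|x|\to\infty$ and $0<\phi<c$. Then the mapping $$k\mapsto Q(\phi)=\int_{\mathbb{R}}\left[2\frac{c-k}{c-\phi}-\left(\frac{c-k}{c-\phi}\right)^2-1\right]dx$$ is strictly increasing on $\left(0,\frac{c}{3}\right)$. *)

theory Defs
  imports "HOL-Analysis.Analysis"
begin

definition smooth_real :: "(real \<Rightarrow> real) \<Rightarrow> bool" where
  "smooth_real f \<longleftrightarrow> (\<forall>n x. (deriv ^^ n) f differentiable (at x))"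

text \<open>Solitary wave profile of the b-family equation with b = 2 (Camassa--Holm)
  u_t - u_txx + 3 u u_x = 2 u_x u_xx + u u_xxx, for the travelling wave
  u(t,x) = phi(x - c t), which turns the PDE into the ODE below
  (u_t = -c phi', u_txx = -c phi''').  Solitary waves are non-constant.\<close>
definition CH_solitary_wave :: "real \<Rightarrow> real \<Rightarrow> (real \<Rightarrow> real) \<Rightarrow> bool" where
  "CH_solitary_wave c k \<phi> \<longleftrightarrow>
     smooth_real \<phi> \<and>
     (\<forall>x. - c * deriv \<phi> x + c * (deriv ^^ 3) \<phi> x + 3 * \<phi> x * deriv \<phi> x
           = 2 * deriv \<phi> x * (deriv ^^ 2) \<phi> x + \<phi> x * (deriv ^^ 3) \<phi> x) \<and>
     deriv \<phi> 0 = 0 \<and>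
     (\<phi> \<longlongrightarrow> k) at_top \<and> (\<phi> \<longlongrightarrow> k) at_bot \<and>
     (\<forall>x. 0 < \<phi> x \<and> \<phi> x < c) \<and>
     (\<exists>x. \<phi> x \<noteq> k)"

definition Q_functional :: "real \<Rightarrow> real \<Rightarrow> (real \<Rightarrow> real) \<Rightarrow> real" where
  "Q_functional c k \<phi> =
     (\<integral>x. (2 * ((c - k) / (c - \<phi> x)) - ((c - k) / (c - \<phi> x))^2 - 1) \<partial>lborel)"

end

theory Submission
  imports Defs
begin


lemma noescape:
  fixes g g' :: "real \<Rightarrow> real"
  assumes der: "\<And>x. DERIV g x :> g' x" and lim: "(g \<longlongrightarrow> l) at_top"
    and d: "\<delta> > 0" and ge: "\<And>x. x \<ge> x0 \<Longrightarrow> g' x \<ge> \<delta>"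
  shows False
proof -
  have "eventually (\<lambda>x. g x < l + 1) at_top"
    using lim by (rule order_tendstoD) simp
  then obtain N where N: "\<And>x. x \<ge> N \<Longrightarrow> g x < l + 1" by (auto simp: eventually_at_top_linorder)
  define x where "x = max N x0 + \<bar>l + 1 - g x0\<bar> / \<delta> + 1"
  have xx0: "x0 < x" using d unfolding x_def by (smt (verit) divide_nonneg_pos abs_ge_zero)
  obtain z where z: "x0 < z" "z < x" "g x - g x0 = (x - x0) * g' z"
    using MVT2[OF xx0, of g g'] der by blast
  have "g x - g x0 \<ge> (x - x0) * \<delta>" unfolding z(3) using z ge[of z] xx0 by (intro mult_left_mono) auto
  moreover have "(x - x0) * \<delta> \<ge> \<bar>l + 1 - g x0\<bar> + \<delta>"
  proof -
    have "x - x0 \<ge> \<bar>l + 1 - g x0\<bar> / \<delta> + 1" unfolding x_def by simp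
    hence "(x - x0) * \<delta> \<ge> (\<bar>l + 1 - g x0\<bar> / \<delta> + 1) * \<delta>" using d by (intro mult_right_mono) auto
    moreover have "(\<bar>l + 1 - g x0\<bar> / \<delta> + 1) * \<delta> = \<bar>l + 1 - g x0\<bar> + \<delta>" using d by (simp add: distrib_right)
    ultimately show ?thesis by linarith
  qed
  moreover have "N \<le> x" unfolding x_def using d by (smt (verit) divide_nonneg_pos abs_ge_zero)
  hence "g x < l + 1" using N[of x] by simp
  ultimately show False using d by linarith
qed

lemma deriv_limit_zero:
  fixes g g' :: "real \<Rightarrow> real"
  assumes der: "\<And>x. DERIV g x :> g' x" and lim: "(g \<longlongrightarrow> l) at_top"
    and lim': "(g' \<longlongrightarrow> m) at_top"
  shows "m = 0"
proof (rule ccontr)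
  assume "m \<noteq> 0"
  show False
  proof (cases "m > 0")
    case True
    have "eventually (\<lambda>x. g' x > m/2) at_top" using order_tendstoD(1)[OF lim', of "m/2"] True by simp
    then obtain N where "\<And>x. x \<ge> N \<Longrightarrow> g' x > m/2" by (auto simp: eventually_at_top_linorder)
    thus False using noescape[OF der lim, of "m/2" N] True by fastforce
  next
    case False
    with \<open>m \<noteq> 0\<close> have m: "m < 0" by simp
    have "eventually (\<lambda>x. g' x < m/2) at_top" using order_tendstoD(2)[OF lim', of "m/2"] m by simp
    then obtain N where N: "\<And>x. x \<ge> N \<Longrightarrow> g' x < m/2" by (auto simp: eventually_at_top_linorder)
    have "\<And>x. DERIV (\<lambda>x. - g x) x :> - g' x" using der by (auto intro: derivative_intros)
    moreover have "((\<lambda>x. - g x) \<longlongrightarrow> - l) at_top" using lim by (intro tendsto_intros)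
    ultimately show False using noescape[of "\<lambda>x. - g x" "\<lambda>x. - g' x" "-l" "-m/2" N] N m by fastforce
  qed
qed

lemma abs_deriv_limit_zero:
  fixes g g' :: "real \<Rightarrow> real"
  assumes der: "\<And>x. DERIV g x :> g' x" and cont: "continuous_on UNIV g'"
    and lim: "(g \<longlongrightarrow> l) at_top"
    and lim': "((\<lambda>x. \<bar>g' x\<bar>) \<longlongrightarrow> \<beta>) at_top"
  shows "\<beta> = 0"
proof (rule ccontr)
  assume nz: "\<beta> \<noteq> 0"
  have "\<beta> \<ge> 0" using lim' by (rule tendsto_lowerbound) auto
  with nz have b: "\<beta> > 0" by simp
  have "eventually (\<lambda>x. \<bar>g' x\<bar> > \<beta>/2) at_top" using order_tendstoD(1)[OF lim', of "\<beta>/2"] b by simp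
  then obtain N where N: "\<And>x. x \<ge> N \<Longrightarrow> \<bar>g' x\<bar> > \<beta>/2" by (auto simp: eventually_at_top_linorder)
  have samesign: "g' x > 0" if xN: "x \<ge> N" and gN: "g' N > 0" for x
  proof (rule ccontr)
    assume "\<not> g' x > 0"
    hence "g' x \<le> 0" by simp
    then obtain z where "N \<le> z" "z \<le> x" "g' z = 0"
      using IVT2'[of g' x 0 N, OF \<open>g' x \<le> 0\<close> less_imp_le[OF gN] \<open>x \<ge> N\<close> continuous_on_subset[OF cont]] by auto
    thus False using N[of z] b by simp
  qed
  have samesign2: "g' x < 0" if xN: "x \<ge> N" and gN: "g' N < 0" for x
  proof (rule ccontr)
    assume "\<not> g' x < 0"
    hence "g' x \<ge> 0" by simp
    then obtain z where "N \<le> z" "z \<le> x" "g' z = 0"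
      using IVT'[of g' N 0 x, OF less_imp_le[OF gN] \<open>g' x \<ge> 0\<close> \<open>x \<ge> N\<close> continuous_on_subset[OF cont]] by auto
    thus False using N[of z] b by simp
  qed
  show False
  proof (cases "g' N > 0")
    case True
    hence "\<And>x. x \<ge> N \<Longrightarrow> g' x \<ge> \<beta>/2" using samesign N by fastforce
    thus False using noescape[OF der lim, of "\<beta>/2" N] b by simp
  next
    case False
    hence "g' N < 0" using N[of N] b by auto
    hence "\<And>x. x \<ge> N \<Longrightarrow> - g' x \<ge> \<beta>/2" using samesign2 N by fastforce
    moreover have "\<And>x. DERIV (\<lambda>x. - g x) x :> - g' x" using der by (auto intro: derivative_intros)
    moreover have "((\<lambda>x. - g x) \<longlongrightarrow> - l) at_top" using lim by (intro tendsto_intros)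
    ultimately show False using noescape[of "\<lambda>x. - g x" "\<lambda>x. - g' x" "-l" "\<beta>/2" N] b by simp
  qed
qed



locale wave =
  fixes c k :: real and \<phi> :: "real \<Rightarrow> real"
  assumes c_pos: "c > 0" and k_pos: "0 < k" and k_less: "k < c/3"
    and W: "CH_solitary_wave c k \<phi>"
begin

definition "f1 = deriv \<phi>"
definition "f2 = deriv f1"
definition "f3 = deriv f2"

lemma smooth: "smooth_real \<phi>" using W unfolding CH_solitary_wave_def by blast
lemma ode0: "- c * deriv \<phi> x + c * (deriv ^^ 3) \<phi> x + 3 * \<phi> x * deriv \<phi> x
           = 2 * deriv \<phi> x * (deriv ^^ 2) \<phi> x + \<phi> x * (deriv ^^ 3) \<phi> x"
  using W unfolding CH_solitary_wave_def by blast
lemma f1_0: "f1 0 = 0" using W unfolding CH_solitary_wave_def f1_def by blast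
lemma lim_top: "(\<phi> \<longlongrightarrow> k) at_top" using W unfolding CH_solitary_wave_def by blast
lemma lim_bot: "(\<phi> \<longlongrightarrow> k) at_bot" using W unfolding CH_solitary_wave_def by blast
lemma bounds: "0 < \<phi> x" "\<phi> x < c" using W unfolding CH_solitary_wave_def by blast+
lemma nonconst: "\<exists>x. \<phi> x \<noteq> k" using W unfolding CH_solitary_wave_def by blast

lemma ode: "- c * f1 x + c * f3 x + 3 * \<phi> x * f1 x = 2 * f1 x * f2 x + \<phi> x * f3 x"
  using ode0[of x] by (simp add: f1_def f2_def f3_def eval_nat_numeral)

lemma d1: "DERIV \<phi> x :> f1 x"
proof -
  have "(deriv ^^ 0) \<phi> differentiable (at x)" using smooth unfolding smooth_real_def by blast
  thus ?thesis unfolding f1_def by (simp add: DERIV_deriv_iff_real_differentiable)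
qed
lemma d2: "DERIV f1 x :> f2 x"
proof -
  have "(deriv ^^ 1) \<phi> differentiable (at x)" using smooth unfolding smooth_real_def by blast
  thus ?thesis unfolding f1_def f2_def by (simp add: DERIV_deriv_iff_real_differentiable)
qed
lemma d3: "DERIV f2 x :> f3 x"
proof -
  have "(deriv ^^ 2) \<phi> differentiable (at x)" using smooth unfolding smooth_real_def by blast
  thus ?thesis unfolding f1_def f2_def f3_def by (simp add: DERIV_deriv_iff_real_differentiable eval_nat_numeral)
qed

lemma cont0: "continuous_on UNIV \<phi>"
  using d1 by (meson DERIV_isCont continuous_at_imp_continuous_on)
lemma cont1: "continuous_on UNIV f1"
  using d2 by (meson DERIV_isCont continuous_at_imp_continuous_on)
lemma cont2: "continuous_on UNIV f2"
  using d3 by (meson DERIV_isCont continuous_at_imp_continuous_on)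

definition "Ef x = - c * \<phi> x + c * f2 x + 3/2 * (\<phi> x)^2 - \<phi> x * f2 x - (f1 x)^2 / 2"
definition "E = Ef 0"

lemma Ef_const: "Ef x = E"
proof -
  have "DERIV Ef y :> 0" for y
  proof -
    have "DERIV Ef y :> - c * f1 y + c * f3 y + 3/2 * (2 * \<phi> y * f1 y) - (f1 y * f2 y + \<phi> y * f3 y)
         - (2 * f1 y * f2 y) / 2"
      unfolding Ef_def[abs_def]
      by (auto intro!: derivative_eq_intros d1 d2 d3 simp: power2_eq_square)
    moreover have "- c * f1 y + c * f3 y + 3/2 * (2 * \<phi> y * f1 y) - (f1 y * f2 y + \<phi> y * f3 y)
         - (2 * f1 y * f2 y) / 2 = 0" using ode[of y] by (simp add: algebra_simps)
    ultimately show ?thesis by simp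
  qed
  thus ?thesis unfolding E_def by (intro DERIV_isconst_all) auto
qed

lemma E_id: "(c - \<phi> x) * f2 x = (f1 x)^2/2 + c * \<phi> x - 3/2 * (\<phi> x)^2 + E"
  using Ef_const[of x] unfolding Ef_def by (simp add: algebra_simps)

definition "Gf x = (c - \<phi> x) * (f1 x)^2 - c * (\<phi> x)^2 + (\<phi> x)^3 - 2 * E * \<phi> x"
definition "B = Gf 0"

lemma Gf_const: "Gf x = B"
proof -
  have "DERIV Gf y :> 0" for y
  proof -
    have "DERIV Gf y :> - f1 y * (f1 y)^2 + (c - \<phi> y) * (2 * f1 y * f2 y) - c * (2 * \<phi> y * f1 y)
          + 3 * (\<phi> y)^2 * f1 y - 2 * E * f1 y"
      unfolding Gf_def[abs_def]
      by (auto intro!: derivative_eq_intros d1 d2 d3 simp: power2_eq_square power3_eq_cube algebra_simps)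
    moreover have "(c - \<phi> y) * (2 * f1 y * f2 y) = f1 y * (2 * ((c - \<phi> y) * f2 y))" by (simp add: algebra_simps)
    ultimately have "DERIV Gf y :> - f1 y * (f1 y)^2 + f1 y * (2 * ((f1 y)^2/2 + c * \<phi> y - 3/2 * (\<phi> y)^2 + E)) - c * (2 * \<phi> y * f1 y)
          + 3 * (\<phi> y)^2 * f1 y - 2 * E * f1 y" using E_id[of y] by simp
    moreover have "- f1 y * (f1 y)^2 + f1 y * (2 * ((f1 y)^2/2 + c * \<phi> y - 3/2 * (\<phi> y)^2 + E)) - c * (2 * \<phi> y * f1 y)
          + 3 * (\<phi> y)^2 * f1 y - 2 * E * f1 y = 0" by (simp add: algebra_simps power2_eq_square)
    ultimately show ?thesis by simp
  qed
  thus ?thesis unfolding B_def by (intro DERIV_isconst_all) auto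
qed

definition "P y = c * y^2 - y^3 + 2 * E * y + B"

lemma P_id: "(c - \<phi> x) * (f1 x)^2 = P (\<phi> x)"
  using Gf_const[of x] unfolding Gf_def P_def by (simp add: algebra_simps)

lemma ck: "c - k > 0" using c_pos k_pos k_less by simp

lemma Pk: "P k = 0" and f1_lim: "(f1 \<longlongrightarrow> 0) at_top"
proof -
  have sq: "(f1 x)^2 = P (\<phi> x) / (c - \<phi> x)" for x
    using P_id[of x] bounds[of x] by (simp add: field_simps)
  have "((\<lambda>x. P (\<phi> x) / (c - \<phi> x)) \<longlongrightarrow> P k / (c - k)) at_top"
    unfolding P_def using ck by (intro tendsto_intros lim_top) auto
  hence "((\<lambda>x. sqrt ((f1 x)^2)) \<longlongrightarrow> sqrt (P k / (c - k))) at_top"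
    unfolding sq by (rule tendsto_real_sqrt)
  hence lim: "((\<lambda>x. \<bar>f1 x\<bar>) \<longlongrightarrow> sqrt (P k / (c - k))) at_top" by simp
  have "sqrt (P k / (c - k)) = 0"
    by (rule abs_deriv_limit_zero[OF d1 cont1 lim_top lim])
  thus "P k = 0" using ck by simp
  with lim show "(f1 \<longlongrightarrow> 0) at_top" by (simp add: tendsto_rabs_zero_iff)
qed

lemma E_val: "E = 3/2 * k^2 - c * k"
proof -
  have sq: "f2 x = ((f1 x)^2/2 + c * \<phi> x - 3/2 * (\<phi> x)^2 + E) / (c - \<phi> x)" for x
    using E_id[of x] bounds[of x] by (simp add: field_simps)
  have "(f2 \<longlongrightarrow> (0^2/2 + c * k - 3/2 * k^2 + E) / (c - k)) at_top"
    unfolding sq[abs_def] using ck by (intro tendsto_intros lim_top f1_lim) auto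
  hence "(0^2/2 + c * k - 3/2 * k^2 + E) / (c - k) = 0"
    by (rule deriv_limit_zero[OF d2 f1_lim])
  thus ?thesis using ck by (simp add: field_simps)
qed

lemma B_val: "B = c * k^2 - 2 * k^3"
  using Pk unfolding P_def E_val by (simp add: algebra_simps power2_eq_square power3_eq_cube)

abbreviation "M \<equiv> c - 2 * k"

lemma key: "(c - \<phi> x) * (f1 x)^2 = (\<phi> x - k)^2 * (M - \<phi> x)"
  unfolding P_id P_def E_val B_val by (simp add: algebra_simps power2_eq_square power3_eq_cube)

end


context wave begin

lemma kM: "k < M" using k_less by simp
lemma cM: "c - M = 2 * k" by simp

lemma le_M: "\<phi> x \<le> M"
proof (cases "\<phi> x = k")
  case True thus ?thesis using kM by simp
next
  case False
  have "0 \<le> (c - \<phi> x) * (f1 x)^2" using bounds[of x] by simp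
  hence "0 \<le> (\<phi> x - k)^2 * (M - \<phi> x)" using key[of x] by simp
  moreover have "(\<phi> x - k)^2 > 0" using False by simp
  ultimately show ?thesis by (auto simp: zero_le_mult_iff)
qed

lemma f1sq_bound: "(f1 x)^2 \<le> (M / (2*k)) * (\<phi> x - k)^2"
proof -
  have "2 * k * (f1 x)^2 \<le> (c - \<phi> x) * (f1 x)^2"
    using le_M[of x] by (intro mult_right_mono) auto
  also have "\<dots> = (\<phi> x - k)^2 * (M - \<phi> x)" by (rule key)
  also have "\<dots> \<le> (\<phi> x - k)^2 * M" using bounds[of x] by (intro mult_left_mono) auto
  finally have "2 * k * (f1 x)^2 \<le> (\<phi> x - k)^2 * M" .
  thus ?thesis using k_pos by (simp add: field_simps)
qed

lemma neq_k: "\<phi> x \<noteq> k"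
proof
  assume x0: "\<phi> x = k"
  define L where "L = 1 + M / (2*k)"
  define w where "w y = (\<phi> y - k)^2" for y
  define w' where "w' y = 2 * (\<phi> y - k) * f1 y" for y
  have dw: "DERIV w y :> w' y" for y
    unfolding w_def[abs_def] w'_def by (auto intro!: derivative_eq_intros d1)
  have bw: "\<bar>w' y\<bar> \<le> L * w y" for y
  proof -
    have "\<bar>w' y\<bar> = 2 * \<bar>\<phi> y - k\<bar> * \<bar>f1 y\<bar>" unfolding w'_def by (simp only: abs_mult)
    also have "\<dots> \<le> (\<phi> y - k)^2 + (f1 y)^2"
    proof -
      have "0 \<le> (\<bar>\<phi> y - k\<bar> - \<bar>f1 y\<bar>)^2" by simp
      also have "\<dots> = (\<phi> y - k)^2 + (f1 y)^2 - 2 * \<bar>\<phi> y - k\<bar> * \<bar>f1 y\<bar>"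
        by (simp add: power2_diff)
      finally show ?thesis by simp
    qed
    also have "\<dots> \<le> (\<phi> y - k)^2 + (M / (2*k)) * (\<phi> y - k)^2" using f1sq_bound[of y] by simp
    finally show ?thesis unfolding L_def w_def by (simp add: algebra_simps)
  qed
  have w0: "w x = 0" unfolding w_def using x0 by simp
  have "w y = 0" for y
  proof (cases "y \<ge> x")
    case True
    define h where "h t = w t * exp (- L * (t - x))" for t
    have dh: "DERIV h t :> (w' t - L * w t) * exp (- L * (t - x))" for t
      unfolding h_def[abs_def] by (auto intro!: derivative_eq_intros dw simp: algebra_simps)
    have "h y \<le> h x"
    proof (cases "y = x")
      case False
      with True have "x < y" by simp
      then obtain z where "h y - h x = (y - x) * ((w' z - L * w z) * exp (- L * (z - x)))"
        using MVT2[of x y h "\<lambda>t. (w' t - L * w t) * exp (- L * (t - x))"] dh \<open>x < y\<close> by blast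
      moreover have "w' z - L * w z \<le> 0" using bw[of z] by simp
      hence hm: "(w' z - L * w z) * exp (- L * (z - x)) \<le> 0" by (rule mult_nonpos_nonneg) simp
      have "(y - x) * ((w' z - L * w z) * exp (- L * (z - x))) \<le> 0"
        by (rule mult_nonneg_nonpos[OF _ hm]) (use \<open>x < y\<close> in simp)
      ultimately show ?thesis by simp
    qed simp
    hence "w y * exp (- L * (y - x)) \<le> 0" unfolding h_def w0 by simp
    moreover have "w y \<ge> 0" unfolding w_def by simp
    ultimately show ?thesis by (simp add: mult_le_0_iff)
  next
    case False
    define h where "h t = w t * exp (L * (t - x))" for t
    have dh: "DERIV h t :> (w' t + L * w t) * exp (L * (t - x))" for t
      unfolding h_def[abs_def] by (auto intro!: derivative_eq_intros dw simp: algebra_simps)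
    from False have "y < x" by simp
    then obtain z where "h x - h y = (x - y) * ((w' z + L * w z) * exp (L * (z - x)))"
      using MVT2[of y x h "\<lambda>t. (w' t + L * w t) * exp (L * (t - x))"] dh \<open>y < x\<close> by blast
    moreover have hm: "w' z + L * w z \<ge> 0" using bw[of z] by simp
    have "(x - y) * ((w' z + L * w z) * exp (L * (z - x))) \<ge> 0"
      using \<open>y < x\<close> hm by simp
    ultimately have "h y \<le> h x" by simp
    hence "w y * exp (L * (y - x)) \<le> 0" unfolding h_def w0 by simp
    moreover have "w y \<ge> 0" unfolding w_def by simp
    ultimately show ?thesis by (simp add: mult_le_0_iff)
  qed
  hence "\<phi> y = k" for y unfolding w_def by simp
  thus False using nonconst by blast
qed

lemma phi0: "\<phi> 0 = M"
proof -
  have "(\<phi> 0 - k)^2 * (M - \<phi> 0) = 0" using key[of 0] f1_0 by simp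
  thus ?thesis using neq_k[of 0] by simp
qed

lemma gt_k: "k < \<phi> x"
proof (rule ccontr)
  assume "\<not> k < \<phi> x"
  hence le: "\<phi> x \<le> k" by simp
  have "\<phi> 0 \<ge> k" using phi0 kM by simp
  show False
  proof (cases "x \<le> 0")
    case True
    obtain z where "\<phi> z = k"
      using IVT'[of \<phi> x k 0, OF le \<open>\<phi> 0 \<ge> k\<close> True continuous_on_subset[OF cont0]] by auto
    thus False using neq_k by blast
  next
    case False
    obtain z where "\<phi> z = k"
      using IVT2'[of \<phi> x k 0, OF le \<open>\<phi> 0 \<ge> k\<close> _ continuous_on_subset[OF cont0]] False by auto
    thus False using neq_k by blast
  qed
qed

lemma crit: "f1 x = 0 \<Longrightarrow> \<phi> x = M"
  using key[of x] neq_k[of x] by simp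

lemma no_two_max:
  assumes ab: "a < b" and pa: "\<phi> a = M" and pb: "\<phi> b = M"
  shows False
proof -
  obtain z where z: "z \<in> {a..b}" "\<And>y. y \<in> {a..b} \<Longrightarrow> \<phi> z \<le> \<phi> y"
    using continuous_attains_inf[of "{a..b}" \<phi>] ab continuous_on_subset[OF cont0] by auto
  have locmin: "f1 y = 0" if "a < y" "y < b" "\<And>t. t \<in> {a..b} \<Longrightarrow> \<phi> y \<le> \<phi> t" for y
  proof (rule DERIV_local_min[OF d1, of "min (y - a) (b - y)"])
    show "0 < min (y - a) (b - y)" using that by simp
    show "\<forall>t. \<bar>y - t\<bar> < min (y - a) (b - y) \<longrightarrow> \<phi> y \<le> \<phi> t"
      using that(3) by (auto simp: abs_less_iff)
  qed
  show False
  proof (cases "\<phi> z < M")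
    case True
    hence "z \<noteq> a" "z \<noteq> b" using pa pb by auto
    hence "a < z" "z < b" using z(1) by auto
    hence "f1 z = 0" using locmin z(2) by blast
    thus False using crit True by simp
  next
    case False
    hence allM: "\<phi> y = M" if "y \<in> {a..b}" for y using z(2)[OF that] le_M[of y] by simp
    define m where "m = (a + b) / 2"
    have f1z: "f1 t = 0" if "\<bar>m - t\<bar> < (b - a) / 2" for t
      proof -
        have t: "a < t" "t < b" using that by (auto simp: m_def abs_less_iff field_simps)
        have "\<phi> t \<le> \<phi> s" if "s \<in> {a..b}" for s using allM[OF that] allM[of t] t by simp
        thus ?thesis using t by (intro locmin) auto
      qed
    have "f2 m = 0"
    proof (rule DERIV_local_const[OF d2, of "(b - a)/2"])
      show "0 < (b - a) / 2" using ab by simp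
      show "\<forall>t. \<bar>m - t\<bar> < (b - a) / 2 \<longrightarrow> f1 m = f1 t" using ab f1z by (auto simp: m_def)
    qed
    moreover have "\<phi> m = M" using ab by (intro allM) (auto simp: m_def)
    ultimately have "0 = c * M - 3/2 * M^2 + E" using E_id[of m] f1z[of m] ab by simp
    moreover have "c * M - 3/2 * M^2 + E = - (M - k) * (c - 3*k) / 2"
      unfolding E_val by (simp add: algebra_simps power2_eq_square)
    moreover have "(M - k) * (c - 3*k) > 0" using kM k_less by simp
    ultimately show False by simp
  qed
qed

lemma lt_M: "x \<noteq> 0 \<Longrightarrow> \<phi> x < M"
  using le_M[of x] no_two_max[of 0 x] no_two_max[of x 0] phi0
  by (cases "x > 0") (auto simp: less_le)

lemma f1_neq: "x \<noteq> 0 \<Longrightarrow> f1 x \<noteq> 0"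
  using crit lt_M by fastforce

lemma f1_neg: "x > 0 \<Longrightarrow> f1 x < 0"
proof -
  assume x: "x > 0"
  obtain z where z: "0 < z" "z < x" "\<phi> x - \<phi> 0 = (x - 0) * f1 z"
    using MVT2[of 0 x \<phi> f1] x d1 by blast
  have "\<phi> x < \<phi> 0" using lt_M[of x] x phi0 by simp
  hence fz: "f1 z \<le> 0" using z x by (smt (verit) mult_pos_pos)
  show "f1 x < 0"
  proof (rule ccontr)
    assume "\<not> f1 x < 0"
    hence "f1 x \<ge> 0" by simp
    then obtain w where "z \<le> w" "w \<le> x" "f1 w = 0"
      using IVT'[of f1 z 0 x, OF fz _ _ continuous_on_subset[OF cont1]] z by auto
    thus False using f1_neq[of w] z by simp
  qed
qed

lemma f1_pos: "x < 0 \<Longrightarrow> f1 x > 0"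
proof -
  assume x: "x < 0"
  obtain z where z: "x < z" "z < 0" "\<phi> 0 - \<phi> x = (0 - x) * f1 z"
    using MVT2[of x 0 \<phi> f1] x d1 by blast
  have "\<phi> x < \<phi> 0" using lt_M[of x] x phi0 by simp
  hence fz: "f1 z \<ge> 0" using z x by (smt (verit) mult_pos_neg)
  show "f1 x > 0"
  proof (rule ccontr)
    assume "\<not> f1 x > 0"
    hence "f1 x \<le> 0" by simp
    then obtain w where "x \<le> w" "w \<le> z" "f1 w = 0"
      using IVT'[of f1 x 0 z, OF _ fz _ continuous_on_subset[OF cont1]] z by auto
    thus False using f1_neq[of w] z by simp
  qed
qed

lemma sqrt_form: "\<bar>f1 x\<bar> = (\<phi> x - k) * sqrt (M - \<phi> x) / sqrt (c - \<phi> x)"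
proof -
  have cp: "c - \<phi> x > 0" using bounds[of x] by simp
  have "(f1 x)^2 = (\<phi> x - k)^2 * ((M - \<phi> x) / (c - \<phi> x))"
    using key[of x] cp by (simp add: field_simps)
  hence "sqrt ((f1 x)^2) = sqrt ((\<phi> x - k)^2) * (sqrt (M - \<phi> x) / sqrt (c - \<phi> x))"
    by (simp add: real_sqrt_mult real_sqrt_divide)
  thus ?thesis using gt_k[of x] by simp
qed

lemma form_left: "x \<le> 0 \<Longrightarrow> f1 x = (\<phi> x - k) * sqrt (M - \<phi> x) / sqrt (c - \<phi> x)"
  using sqrt_form[of x] f1_pos[of x] f1_0 by (cases "x = 0") auto

lemma form_right: "x \<ge> 0 \<Longrightarrow> - f1 x = (\<phi> x - k) * sqrt (M - \<phi> x) / sqrt (c - \<phi> x)"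
  using sqrt_form[of x] f1_neg[of x] f1_0 by (cases "x = 0") auto

end


definition Gk :: "real \<Rightarrow> real \<Rightarrow> real \<Rightarrow> real" where
  "Gk c k t = t / sqrt (1 - t) *
     ((c - 3*k) / (c - k - t*(c - 3*k)) * sqrt ((c - 3*k) / (c - k - t*(c - 3*k))))"

lemma Gk_measurable[measurable]: "Gk c k \<in> borel_measurable borel"
  unfolding Gk_def[abs_def] by measurable

lemma alg_ident:
  fixes a sd sc sM :: real
  assumes "sd > 0" "sc > 0" "sM > 0"
  shows "(a / sd^2) / (sM / sd) * (sd^2 / sc^2 * (sd / sc)) * (a * sM / sc / sd^2) = a^2 / (sc^2)^2"
  using assms by (simp add: field_simps power2_eq_square)

lemma Gk_ident:
  fixes c k y :: real
  assumes c: "c > 0" and k: "0 < k" "k < c/3" and y: "k < y" "y < c - 2*k"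
  shows "Gk c k ((y - k) / (c - 3*k)) * ((y - k) * sqrt (c - 2*k - y) / sqrt (c - y) / (c - 3*k))
       = (y - k)^2 / (c - y)^2"
proof -
  define d where "d = c - 3*k"
  have d: "d > 0" using k unfolding d_def by simp
  have t1: "1 - (y - k) / d = (c - 2*k - y) / d" using d unfolding d_def by (simp add: field_simps)
  have t2: "c - k - (y - k) / d * d = c - y" using d by simp
  define sd where "sd = sqrt d"
  define sc where "sc = sqrt (c - y)"
  define sM where "sM = sqrt (c - 2*k - y)"
  have pos: "sd > 0" "sc > 0" "sM > 0" unfolding sd_def sc_def sM_def using d y k by auto
  have sq: "sd^2 = d" "sc^2 = c - y" unfolding sd_def sc_def using d y k by auto
  have "Gk c k ((y - k) / d) = ((y - k) / d) / (sM / sd) * (d / (c - y) * (sd / sc))"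
    unfolding Gk_def d_def[symmetric] t1 t2 sd_def sc_def sM_def
    by (simp add: real_sqrt_divide)
  also have "\<dots> = ((y - k) / sd^2) / (sM / sd) * (sd^2 / sc^2 * (sd / sc))" unfolding sq ..
  finally have "Gk c k ((y - k) / d) * ((y - k) * sM / sc / d) =
      ((y - k) / sd^2) / (sM / sd) * (sd^2 / sc^2 * (sd / sc)) * ((y - k) * sM / sc / sd^2)"
    unfolding sq by simp
  also have "\<dots> = (y - k)^2 / (sc^2)^2" by (rule alg_ident[OF pos])
  also have "\<dots> = (y - k)^2 / (c - y)^2" unfolding sq ..
  finally show ?thesis unfolding d_def sM_def sc_def using y by simp
qed

lemma subst_half:
  fixes c k :: real and \<psi> \<psi>' :: "real \<Rightarrow> real"
  assumes c: "c > 0" and k: "0 < k" "k < c/3"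
    and der: "\<And>x. DERIV \<psi> x :> \<psi>' x"
    and cont': "continuous_on UNIV \<psi>'"
    and form: "\<And>x. x \<le> 0 \<Longrightarrow> \<psi>' x = (\<psi> x - k) * sqrt (c - 2*k - \<psi> x) / sqrt (c - \<psi> x)"
    and rng1: "\<And>x. x \<le> 0 \<Longrightarrow> k < \<psi> x" and rng2: "\<And>x. x < 0 \<Longrightarrow> \<psi> x < c - 2*k"
    and p0: "\<psi> 0 = c - 2*k"
    and lim: "(\<psi> \<longlongrightarrow> k) at_bot"
  shows "(\<integral>\<^sup>+x. ennreal ((\<psi> x - k)^2 / (c - \<psi> x)^2 * indicator {..<0} x) \<partial>lborel)
       = (\<integral>\<^sup>+t. ennreal (Gk c k t * indicator {0<..<1} t) \<partial>lborel)"
proof -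
  define d where "d = c - 3*k"
  have d: "d > 0" using k unfolding d_def by simp
  define g where "g x = (\<psi> x - k) / d" for x
  define g' where "g' x = \<psi>' x / d" for x
  define F where "F x = (\<psi> x - k)^2 / (c - \<psi> x)^2" for x
  have contpsi: "continuous_on UNIV \<psi>"
    using der by (meson DERIV_isCont continuous_at_imp_continuous_on)
  have [measurable]: "\<psi> \<in> borel_measurable borel" by (rule borel_measurable_continuous_onI[OF contpsi])
  have Fm[measurable]: "F \<in> borel_measurable borel" unfolding F_def[abs_def] by measurable
  have dg: "DERIV g x :> g' x" for x unfolding g_def[abs_def] g'_def
    using d by (auto intro!: derivative_eq_intros der)
  have leM: "x \<le> 0 \<Longrightarrow> \<psi> x \<le> c - 2*k" for x using rng2[of x] p0 by (cases "x = 0") auto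
  have g'nn: "x \<le> 0 \<Longrightarrow> g' x \<ge> 0" for x
    unfolding g'_def using form[of x] rng1[of x] leM[of x] d k by (auto intro!: divide_nonneg_pos mult_nonneg_nonneg)
  have g0: "g 0 = 1" unfolding g_def p0 using d by (simp add: d_def)
  have gpos: "x \<le> 0 \<Longrightarrow> g x > 0" for x unfolding g_def using rng1[of x] d by simp
  have gmono: "a \<le> b \<Longrightarrow> b \<le> 0 \<Longrightarrow> g a \<le> g b" for a b
    using deriv_nonneg_imp_mono[of a b g g'] dg g'nn by auto
  have sub: "(\<integral>\<^sup>+t. ennreal (Gk c k t * indicator {g (- real n)..g 0} t) \<partial>lborel) =
      (\<integral>\<^sup>+x. ennreal (Gk c k (g x) * g' x * indicator {- real n..0} x) \<partial>lborel)" for n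
  proof (rule nn_integral_substitution)
    show "set_borel_measurable borel {g (- real n)..g 0} (Gk c k)"
      unfolding set_borel_measurable_def by measurable
    show "continuous_on {- real n..0} g'" unfolding g'_def
      using d by (intro continuous_intros continuous_on_subset[OF cont']) auto
  qed (use dg g'nn in auto)
  have pw: "Gk c k (g x) * g' x * indicator {- real n..0} x = F x * indicator {- real n..<0} x" for n x
  proof (cases "x \<in> {- real n..<0}")
    case True
    hence "x < 0" by simp
    have "Gk c k (g x) * g' x = F x" unfolding g_def g'_def F_def form[OF less_imp_le[OF \<open>x < 0\<close>]]
      d_def using Gk_ident[OF c k rng1[of x] rng2[of x]] \<open>x < 0\<close> by simp
    thus ?thesis using True by simp
  next
    case False
    have "g' 0 = 0" unfolding g'_def form[of 0, simplified] p0 by simp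
    thus ?thesis using False by (cases "x = 0") (auto simp: indicator_def)
  qed
  define A where "A n = {- real n..<(0::real)}" for n
  define Bs where "Bs n = {g (- real n)..1}" for n
  define \<mu>F where "\<mu>F = density lborel (\<lambda>x. ennreal (F x))"
  define \<mu>G where "\<mu>G = density lborel (\<lambda>x. ennreal (Gk c k x))"
  have eF: "emeasure \<mu>F S = (\<integral>\<^sup>+x. ennreal (F x * indicator S x) \<partial>lborel)" if "S \<in> sets borel" for S
    unfolding \<mu>F_def using that
    by (subst emeasure_density) (auto intro!: nn_integral_cong split: split_indicator)
  have eG: "emeasure \<mu>G S = (\<integral>\<^sup>+x. ennreal (Gk c k x * indicator S x) \<partial>lborel)" if "S \<in> sets borel" for S
    unfolding \<mu>G_def using that
    by (subst emeasure_density) (auto intro!: nn_integral_cong split: split_indicator)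
  have eq_n: "emeasure \<mu>F (A n) = emeasure \<mu>G (Bs n)" for n
    unfolding eF[of "A n", unfolded A_def, simplified] eG[of "Bs n", unfolded Bs_def, simplified] A_def Bs_def
    using sub[of n] unfolding g0 pw by simp
  have incA: "incseq A" unfolding A_def incseq_def by auto
  have incB: "incseq Bs" unfolding Bs_def incseq_def using gmono by auto
  have UA: "(\<Union>n. A n) = {..<0}"
  proof (auto simp: A_def)
    fix x :: real assume "x < 0"
    obtain n :: nat where "- x \<le> real n" using real_arch_simple by blast
    thus "\<exists>n. - real n \<le> x" by (intro exI[of _ n]) simp
  qed
  have UB: "(\<Union>n. Bs n) = {0<..1}"
  proof (auto simp: Bs_def)
    fix n :: nat and t :: real assume "g (- real n) \<le> t"
    thus "0 < t" using gpos[of "- real n"] by simp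
  next
    fix t :: real assume t: "0 < t" "t \<le> 1"
    have "(g \<longlongrightarrow> (k - k) / d) at_bot" unfolding g_def[abs_def] by (intro tendsto_intros lim) (use d in simp)
    hence "eventually (\<lambda>x. g x < t) at_bot" using t by (intro order_tendstoD(2)) auto
    then obtain N where N: "\<And>x. x \<le> N \<Longrightarrow> g x < t" by (auto simp: eventually_at_bot_linorder)
    obtain n :: nat where "- N \<le> real n" using real_arch_simple by blast
    thus "\<exists>n. g (- real n) \<le> t" using N[of "- real n"] by (intro exI[of _ n]) simp
  qed
  have "(\<integral>\<^sup>+x. ennreal (F x * indicator {..<0} x) \<partial>lborel) = emeasure \<mu>F (\<Union>n. A n)"
    unfolding UA by (rule eF[symmetric]) simp
  also have "\<dots> = (SUP n. emeasure \<mu>F (A n))"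
    by (rule SUP_emeasure_incseq[symmetric, OF _ incA]) (auto simp: \<mu>F_def A_def)
  also have "\<dots> = (SUP n. emeasure \<mu>G (Bs n))" unfolding eq_n ..
  also have "\<dots> = emeasure \<mu>G (\<Union>n. Bs n)"
    by (rule SUP_emeasure_incseq[OF _ incB]) (auto simp: \<mu>G_def Bs_def)
  also have "\<dots> = (\<integral>\<^sup>+x. ennreal (Gk c k x * indicator {0<..1} x) \<partial>lborel)"
    unfolding UB by (rule eG) simp
  also have "\<dots> = (\<integral>\<^sup>+x. ennreal (Gk c k x * indicator {0<..<1} x) \<partial>lborel)"
    by (rule nn_integral_cong) (auto simp: indicator_def Gk_def)
  finally show ?thesis unfolding F_def .
qed



definition IG :: "real \<Rightarrow> real \<Rightarrow> ennreal" where
  "IG c k = (\<integral>\<^sup>+t. ennreal (Gk c k t * indicator {0<..<1} t) \<partial>lborel)"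

context wave begin

definition "Fp x = (\<phi> x - k)^2 / (c - \<phi> x)^2"

lemma Fp_nonneg: "Fp x \<ge> 0" unfolding Fp_def by simp

lemma phi_meas[measurable]: "\<phi> \<in> borel_measurable borel"
  by (rule borel_measurable_continuous_onI[OF cont0])
lemma Fp_meas[measurable]: "Fp \<in> borel_measurable borel"
  unfolding Fp_def[abs_def] by measurable

lemma half_left: "(\<integral>\<^sup>+x. ennreal (Fp x * indicator {..<0} x) \<partial>lborel) = IG c k"
  unfolding Fp_def IG_def
  by (rule subst_half[OF c_pos k_pos k_less d1 cont1 form_left gt_k _ phi0 lim_bot])
     (auto intro: lt_M)

lemma half_right: "(\<integral>\<^sup>+x. ennreal (Fp x * indicator {0<..} x) \<partial>lborel) = IG c k"
proof -
  have "(\<integral>\<^sup>+x. ennreal (Fp x * indicator {0<..} x) \<partial>lborel)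
      = (\<integral>\<^sup>+x. ennreal (Fp (0 + -1 * x) * indicator {0<..} (0 + -1 * x)) \<partial>lborel)"
    using nn_integral_real_affine[of "\<lambda>x. ennreal (Fp x * indicator {0<..} x)" "-1" 0] by simp
  also have "\<dots> = (\<integral>\<^sup>+x. ennreal ((\<phi> (-x) - k)^2 / (c - \<phi> (-x))^2 * indicator {..<0} x) \<partial>lborel)"
    by (auto intro!: nn_integral_cong simp: Fp_def indicator_def)
  also have "\<dots> = IG c k" unfolding IG_def
  proof (rule subst_half[OF c_pos k_pos k_less, of "\<lambda>x. \<phi> (-x)" "\<lambda>x. - f1 (-x)"])
    show "DERIV (\<lambda>x. \<phi> (-x)) x :> - f1 (-x)" for x
    proof -
      have "DERIV (\<lambda>x. -x) x :> -1" by (auto intro!: derivative_eq_intros)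
      from DERIV_chain2[OF d1[of "-x"] this] show ?thesis by simp
    qed
    show "continuous_on UNIV (\<lambda>x. - f1 (-x))"
      by (intro continuous_intros continuous_on_compose2[OF cont1]) auto
    show "((\<lambda>x. \<phi> (-x)) \<longlongrightarrow> k) at_bot"
      using filterlim_compose[OF lim_top filterlim_uminus_at_top_at_bot] by simp
  qed (use form_right gt_k lt_M phi0 in auto)
  finally show ?thesis .
qed

lemma total: "(\<integral>\<^sup>+x. ennreal (Fp x) \<partial>lborel) = 2 * IG c k"
proof -
  have "(\<integral>\<^sup>+x. ennreal (Fp x) \<partial>lborel) =
      (\<integral>\<^sup>+x. ennreal (Fp x * indicator {..<0} x) + ennreal (Fp x * indicator {0<..} x) \<partial>lborel)"
  proof (rule nn_integral_cong_AE)
    show "AE x in lborel. ennreal (Fp x) = ennreal (Fp x * indicator {..<0} x) + ennreal (Fp x * indicator {0<..} x)"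
      using AE_lborel_singleton[of 0] by eventually_elim (auto simp: indicator_def)
  qed
  also have "\<dots> = (\<integral>\<^sup>+x. ennreal (Fp x * indicator {..<0} x) \<partial>lborel) + (\<integral>\<^sup>+x. ennreal (Fp x * indicator {0<..} x) \<partial>lborel)"
    by (rule nn_integral_add) auto
  also have "\<dots> = 2 * IG c k" unfolding half_left half_right by (simp add: mult_2)
  finally show ?thesis .
qed

lemma Q_val: "Q_functional c k \<phi> = - enn2real (2 * IG c k)"
proof -
  have "(2 * ((c - k) / (c - \<phi> x)) - ((c - k) / (c - \<phi> x))^2 - 1) = - Fp x" for x
  proof -
    have "c - \<phi> x \<noteq> 0" using bounds[of x] by simp
    hence e: "(c - k) / (c - \<phi> x) = 1 + (\<phi> x - k) / (c - \<phi> x)" by (simp add: field_simps)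
    have "2 * (1 + z) - (1 + z)^2 - 1 = - (z^2)" for z :: real by (simp add: power2_eq_square algebra_simps)
    from this[of "(\<phi> x - k)/(c - \<phi> x)"] show ?thesis unfolding e Fp_def power_divide .
  qed
  hence "Q_functional c k \<phi> = (\<integral>x. - Fp x \<partial>lborel)" unfolding Q_functional_def by simp
  also have "\<dots> = - (\<integral>x. Fp x \<partial>lborel)" by simp
  also have "(\<integral>x. Fp x \<partial>lborel) = enn2real (\<integral>\<^sup>+x. ennreal (Fp x) \<partial>lborel)"
    by (rule integral_eq_nn_integral) (auto simp: Fp_nonneg)
  finally show ?thesis unfolding total .
qed

end


lemma rho_facts:
  fixes c k t :: real
  assumes c: "c > 0" and k: "0 < k" "k < c/3" and t: "0 < t" "t < 1"
  shows "c - k - t*(c - 3*k) > 2*k"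
proof -
  have "t*(c - 3*k) < 1 * (c - 3*k)" using t k by (intro mult_strict_right_mono) auto
  thus ?thesis by simp
qed

lemma Gk_bound:
  fixes c k t :: real
  assumes c: "c > 0" and k: "0 < k" "k < c/3" and t: "0 < t" "t < 1"
  shows "0 \<le> Gk c k t \<and> Gk c k t \<le> ((c - 3*k) / (2*k) * sqrt ((c - 3*k) / (2*k))) * (1 / sqrt (1 - t))"
proof -
  define d where "d = c - 3*k"
  have d: "d > 0" using k unfolding d_def by simp
  have den: "c - k - t*d > 2*k" using rho_facts[OF c k t] unfolding d_def .
  define \<rho> where "\<rho> = d / (c - k - t*d)"
  have r0: "0 \<le> \<rho>" unfolding \<rho>_def using d den k by simp
  have r1: "\<rho> \<le> d / (2*k)" unfolding \<rho>_def using d den k by (intro divide_left_mono) auto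
  have rs: "\<rho> * sqrt \<rho> \<le> d / (2*k) * sqrt (d / (2*k))"
    using r0 r1 by (intro mult_mono real_sqrt_le_mono) auto
  have s: "0 < sqrt (1 - t)" using t by simp
  have tt: "t / sqrt (1 - t) \<le> 1 / sqrt (1 - t)" using t s by (intro divide_right_mono) auto
  have G: "Gk c k t = t / sqrt (1 - t) * (\<rho> * sqrt \<rho>)" unfolding Gk_def \<rho>_def d_def ..
  have "Gk c k t \<le> 1 / sqrt (1 - t) * (d / (2*k) * sqrt (d / (2*k)))"
    unfolding G by (rule mult_mono[OF tt rs]) (use r0 s t in auto)
  moreover have "0 \<le> Gk c k t" unfolding G using r0 t s by simp
  ultimately show ?thesis unfolding d_def by (simp add: mult.commute)
qed

lemma Gk_strict:
  fixes c k1 k2 t :: real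
  assumes c: "c > 0" and k: "0 < k1" "k1 < k2" "k2 < c/3" and t: "0 < t" "t < 1"
  shows "Gk c k2 t < Gk c k1 t"
proof -
  define d1 where "d1 = c - 3*k1"
  define d2 where "d2 = c - 3*k2"
  have d: "d1 > 0" "d2 > 0" using k unfolding d1_def d2_def by auto
  have den1: "c - k1 - t*d1 > 2*k1" using rho_facts[OF c, of k1 t] k t unfolding d1_def by simp
  have den2: "c - k2 - t*d2 > 2*k2" using rho_facts[OF c, of k2 t] k t unfolding d2_def by simp
  define r1 where "r1 = d1 / (c - k1 - t*d1)"
  define r2 where "r2 = d2 / (c - k2 - t*d2)"
  have r2pos: "0 < r2" unfolding r2_def using d den2 k by simp
  have cross: "d2 * (c - k1 - t*d1) < d1 * (c - k2 - t*d2)"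
  proof -
    have "d1 * (c - k2 - t*d2) - d2 * (c - k1 - t*d1) = 2 * c * (k2 - k1)"
      unfolding d1_def d2_def by (simp add: algebra_simps)
    thus ?thesis using c k by (smt (verit) mult_pos_pos)
  qed
  have A1: "c - k1 - t*d1 > 0" and A2: "c - k2 - t*d2 > 0" using den1 den2 k by auto
  have "r2 < r1" unfolding r1_def r2_def using A1 A2 cross
    by (simp add: field_simps)
  hence rr: "r2 * sqrt r2 < r1 * sqrt r1" using r2pos by (intro mult_strict_mono) auto
  have pos: "0 < t / sqrt (1 - t)" using t by simp
  have "Gk c k2 t = t / sqrt (1 - t) * (r2 * sqrt r2)" unfolding Gk_def r2_def d2_def ..
  moreover have "Gk c k1 t = t / sqrt (1 - t) * (r1 * sqrt r1)" unfolding Gk_def r1_def d1_def ..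
  ultimately show ?thesis using mult_strict_left_mono[OF rr pos] by simp
qed

lemma inv_sqrt_fin:
  "(\<integral>\<^sup>+t. ennreal (indicator {0<..<1} t *\<^sub>R (1 / sqrt (1 - t))) \<partial>lborel) \<noteq> \<infinity>"
proof -
  have "set_integrable lborel (einterval (ereal 0) (ereal 1)) (\<lambda>t. 1 / sqrt (1 - t))"
  proof (rule interval_integral_FTC_nonneg(1)[where F = "\<lambda>t. - 2 * sqrt (1 - t)" and A = "-2" and B = 0])
    show "DERIV (\<lambda>t. - 2 * sqrt (1 - t)) x :> 1 / sqrt (1 - x)" if "ereal 0 < ereal x" "ereal x < ereal 1" for x
      using that by (auto intro!: derivative_eq_intros simp: field_simps)
    show "isCont (\<lambda>t. 1 / sqrt (1 - t)) x" if "ereal 0 < ereal x" "ereal x < ereal 1" for x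
      using that by (auto intro!: continuous_intros)
    show "AE x in lborel. ereal 0 < ereal x \<longrightarrow> ereal x < ereal 1 \<longrightarrow> 0 \<le> 1 / sqrt (1 - x)"
      by auto
    have "((\<lambda>t. - 2 * sqrt (1 - t)) \<longlongrightarrow> - 2 * sqrt (1 - 0)) (at_right 0)"
      by (intro tendsto_intros)
    thus "(((\<lambda>t. - 2 * sqrt (1 - t)) \<circ> real_of_ereal) \<longlongrightarrow> -2) (at_right (ereal 0))"
      by (simp add: ereal_tendsto_simps1)
    have "((\<lambda>t. - 2 * sqrt (1 - t)) \<longlongrightarrow> - 2 * sqrt (1 - 1)) (at_left 1)"
      by (intro tendsto_intros)
    thus "(((\<lambda>t. - 2 * sqrt (1 - t)) \<circ> real_of_ereal) \<longlongrightarrow> 0) (at_left (ereal 1))"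
      by (simp add: ereal_tendsto_simps1)
  qed simp
  hence "integrable lborel (\<lambda>t. indicator {0<..<1} t *\<^sub>R (1 / sqrt (1 - t)))"
    unfolding set_integrable_def by simp
  thus ?thesis by (rule integrableD(2))
qed

lemma IG_fin:
  fixes c k :: real
  assumes c: "c > 0" and k: "0 < k" "k < c/3"
  shows "IG c k < \<infinity>"
proof -
  define C where "C = (c - 3*k) / (2*k) * sqrt ((c - 3*k) / (2*k))"
  have C: "C \<ge> 0" unfolding C_def using k by simp
  have "IG c k \<le> (\<integral>\<^sup>+t. ennreal C * ennreal (indicator {0<..<1} t *\<^sub>R (1 / sqrt (1 - t))) \<partial>lborel)"
    unfolding IG_def
  proof (rule nn_integral_mono)
    fix t :: real
    show "ennreal (Gk c k t * indicator {0<..<1} t) \<le> ennreal C * ennreal (indicator {0<..<1} t *\<^sub>R (1 / sqrt (1 - t)))"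
    proof (cases "t \<in> {0<..<1}")
      case True
      thus ?thesis using Gk_bound[OF c k, of t] C
        by (simp add: ennreal_mult[symmetric] C_def)
    qed simp
  qed
  also have "\<dots> = ennreal C * (\<integral>\<^sup>+t. ennreal (indicator {0<..<1} t *\<^sub>R (1 / sqrt (1 - t))) \<partial>lborel)"
    by (rule nn_integral_cmult) measurable
  also have "\<dots> < \<infinity>" using inv_sqrt_fin by (simp add: ennreal_mult_less_top less_top)
  finally show ?thesis .
qed

lemma IG_less:
  fixes c k1 k2 :: real
  assumes c: "c > 0" and k: "0 < k1" "k1 < k2" "k2 < c/3"
  shows "IG c k2 < IG c k1"
  unfolding IG_def
proof (rule nn_integral_less)
  show "(\<integral>\<^sup>+t. ennreal (Gk c k2 t * indicator {0<..<1} t) \<partial>lborel) \<noteq> \<infinity>"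
    using IG_fin[OF c, of k2] k unfolding IG_def by simp
  show "AE t in lborel. ennreal (Gk c k2 t * indicator {0<..<1} t) \<le> ennreal (Gk c k1 t * indicator {0<..<1} t)"
  proof (intro AE_I2)
    fix t :: real
    show "ennreal (Gk c k2 t * indicator {0<..<1} t) \<le> ennreal (Gk c k1 t * indicator {0<..<1} t)"
      using Gk_strict[OF c k, of t] by (cases "t \<in> {0<..<1}") (auto intro!: ennreal_leI)
  qed
  show "\<not> (AE t in lborel. ennreal (Gk c k1 t * indicator {0<..<1} t) \<le> ennreal (Gk c k2 t * indicator {0<..<1} t))"
  proof
    assume "AE t in lborel. ennreal (Gk c k1 t * indicator {0<..<1} t) \<le> ennreal (Gk c k2 t * indicator {0<..<1} t)"
    hence "AE t in lborel. t \<notin> {0<..<(1::real)}"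
    proof (rule AE_mp[OF _ AE_I2], intro impI notI)
      fix t :: real
      assume t: "t \<in> {0<..<1}" and le: "ennreal (Gk c k1 t * indicator {0<..<1} t) \<le> ennreal (Gk c k2 t * indicator {0<..<1} t)"
      have "0 \<le> Gk c k2 t" using Gk_bound[OF c, of k2 t] k t by simp
      hence "Gk c k1 t \<le> Gk c k2 t" using le t by simp
      thus False using Gk_strict[OF c k, of t] t by simp
    qed
    hence "{0<..<(1::real)} \<in> null_sets lborel" by (subst AE_iff_null_sets) auto
    hence "emeasure lborel {0<..<(1::real)} = 0" by (rule null_setsD1)
    thus False by simp
  qed
qed measurable



theorem lemma5p1:
  fixes c k1 k2 :: real and \<phi>1 \<phi>2 :: "real \<Rightarrow> real"
  assumes "c > 0"
    and "0 < k1" and "k1 < k2" and "k2 < c / 3"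
    and "CH_solitary_wave c k1 \<phi>1"
    and "CH_solitary_wave c k2 \<phi>2"
  shows "Q_functional c k1 \<phi>1 < Q_functional c k2 \<phi>2"
proof -
  interpret w1: wave c k1 \<phi>1 using assms by unfold_locales auto
  interpret w2: wave c k2 \<phi>2 using assms by unfold_locales auto
  have lt: "IG c k2 < IG c k1" by (rule IG_less) (use assms in auto)
  have fin1: "IG c k1 < \<infinity>" by (rule IG_fin) (use assms in auto)
  have fin2: "IG c k2 < \<infinity>" using lt fin1 by simp
  have "enn2real (IG c k2) < enn2real (IG c k1)"
    using lt fin1 fin2 by (subst enn2real_less_iff) (auto simp: ennreal_enn2real)
  moreover have "enn2real (2 * IG c k) = 2 * enn2real (IG c k)" for k
    by (simp add: enn2real_mult)
  ultimately show ?thesis unfolding w1.Q_val w2.Q_val by simp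
qed


end
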